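(* The number of representatives for vertices on $P(s,t)$ satisfies $|\mathcal{R}_V|\le 5\sqrt{Mn}$.
   Context: $G=(V,E,w)$ is an undirected graph on $n$ vertices with integer edge weights in $[1,M]$, $s$ a source vertex, $T_s$ a shortest path tree rooted at $s$, and $P(s,t)$ the $s$-$t$ path in $T_s$. $d(\cdot,\cdot)$ is the distance in $G$, $d(s,t,v)$ the length of a shortest $s$-$t$ path in $G-v$ (vertex $v$ removed); a replacement path for $v$ is a shortest $s$-$t$ path in $G-v$. $P[a..b]$ denotes the subpath of $P$ from $a$ to $b$. Every replacement path is assumed to consist of a common prefix with $P(s,t)$, a detour part disjoint from $P(s,t)$ (apart from its endpoints), and a common suffix. Fix a target $t$ and a vertex $x$ on $P(s,t)$ (the pivot $D[t]$, the last vertex on $P(s,t)$ from a pivot set $D$). Let $v_1,\dots,v_k$ be the vertices $v\neq s$ on $P(s,t)[s..x]$ with $d(s,t,v)<d(s,x,v)+d(x,t)$ (far case II), ordered by increasing distance from $s$. In this order, each $v_i$ chooses a representative replacement path: if one of its replacement paths was already chosen by an earlier vertex it takes that one, otherwise an arbitrary one. $\mathcal{R}_V$ is the set of chosen representatives. *)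

theory Defs
  imports Complex_Main "HOL-Library.Extended_Nat"
begin

text \<open>Undirected weighted graph: vertex set V, symmetric edge relation E,
  weight function w. Paths are vertex lists.\<close>

definition is_walk :: "('a \<Rightarrow> 'a \<Rightarrow> bool) \<Rightarrow> 'a list \<Rightarrow> bool" where
  "is_walk E p \<longleftrightarrow> p \<noteq> [] \<and> (\<forall>i. Suc i < length p \<longrightarrow> E (p ! i) (p ! Suc i))"

definition walk_weight :: "('a \<Rightarrow> 'a \<Rightarrow> nat) \<Rightarrow> 'a list \<Rightarrow> nat" where
  "walk_weight w p = sum_list (map (\<lambda>(a, b). w a b) (zip p (tl p)))"

definition walks_avoiding :: "('a \<Rightarrow> 'a \<Rightarrow> bool) \<Rightarrow> 'a set \<Rightarrow> 'a \<Rightarrow> 'a \<Rightarrow> 'a list set" where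
  "walks_avoiding E X u v = {p. is_walk E p \<and> hd p = u \<and> last p = v \<and> set p \<inter> X = {}}"

text \<open>Distance from u to v in G - X (infinite if no path).
  d(u,v) = gdist E w {} u v,  d(u,v,y) = gdist E w {y} u v.\<close>
definition gdist :: "('a \<Rightarrow> 'a \<Rightarrow> bool) \<Rightarrow> ('a \<Rightarrow> 'a \<Rightarrow> nat) \<Rightarrow> 'a set \<Rightarrow> 'a \<Rightarrow> 'a \<Rightarrow> enat" where
  "gdist E w X u v = (INF p \<in> walks_avoiding E X u v. enat (walk_weight w p))"

definition replacement_path :: "('a \<Rightarrow> 'a \<Rightarrow> bool) \<Rightarrow> ('a \<Rightarrow> 'a \<Rightarrow> nat) \<Rightarrow> 'a \<Rightarrow> 'a \<Rightarrow> 'a \<Rightarrow> 'a list \<Rightarrow> bool" where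
  "replacement_path E w s t y p \<longleftrightarrow>
     p \<in> walks_avoiding E {y} s t \<and> enat (walk_weight w p) = gdist E w {y} s t"

text \<open>Subpath P[s..x] of a (simple) path P starting at s.\<close>
definition subpath_to :: "'a list \<Rightarrow> 'a \<Rightarrow> 'a list" where
  "subpath_to P x = takeWhile (\<lambda>u. u \<noteq> x) P @ [x]"

definition far_case_II :: "('a \<Rightarrow> 'a \<Rightarrow> bool) \<Rightarrow> ('a \<Rightarrow> 'a \<Rightarrow> nat) \<Rightarrow> 'a list \<Rightarrow> 'a \<Rightarrow> 'a \<Rightarrow> 'a \<Rightarrow> 'a set" where
  "far_case_II E w P s t x = {v \<in> set (subpath_to P x). v \<noteq> s \<and>
       gdist E w {v} s t < gdist E w {v} s x + gdist E w {} x t}"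

definition prefix_detour_suffix :: "'a list \<Rightarrow> 'a list \<Rightarrow> bool" where
  "prefix_detour_suffix P Q \<longleftrightarrow> (\<exists>i j D. i < j \<and> j < length P \<and>
       Q = take (Suc i) P @ D @ drop j P \<and> set D \<inter> set P = {})"

end

theory Submission
  imports Defs
begin


lemma ww_Nil[simp]: "walk_weight w [] = 0"
  by (simp add: walk_weight_def)
lemma ww_single[simp]: "walk_weight w [a] = 0"
  by (simp add: walk_weight_def)
lemma ww_Cons2[simp]: "walk_weight w (a # b # r) = w a b + walk_weight w (b # r)"
  by (simp add: walk_weight_def)

lemma is_walk_single[simp]: "is_walk E [a]"
  by (simp add: is_walk_def)

lemma is_walk_Cons2[simp]: "is_walk E (a # b # r) \<longleftrightarrow> E a b \<and> is_walk E (b # r)"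
proof
  assume h: "is_walk E (a # b # r)"
  have h2: "\<And>i. Suc i < Suc (Suc (length r)) \<Longrightarrow> E ((a # b # r) ! i) ((a # b # r) ! Suc i)"
    using h unfolding is_walk_def by simp
  have "E a b" using h2[of 0] by simp
  moreover have "is_walk E (b # r)" unfolding is_walk_def
  proof (intro conjI allI impI)
    fix i assume "Suc i < length (b # r)"
    then show "E ((b # r) ! i) ((b # r) ! Suc i)" using h2[of "Suc i"] by simp
  qed simp
  ultimately show "E a b \<and> is_walk E (b # r)" by simp
next
  assume h: "E a b \<and> is_walk E (b # r)"
  show "is_walk E (a # b # r)" unfolding is_walk_def
  proof (intro conjI allI impI)
    fix i assume i: "Suc i < length (a # b # r)"
    show "E ((a # b # r) ! i) ((a # b # r) ! Suc i)"
    proof (cases i)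
      case 0 then show ?thesis using h by simp
    next
      case (Suc j) then show ?thesis using h i unfolding is_walk_def by auto
    qed
  qed simp
qed

lemma join_props:
  assumes "p \<noteq> []" "q \<noteq> []" "last p = hd q"
  shows "walk_weight w (p @ tl q) = walk_weight w p + walk_weight w q"
    and "is_walk E p \<Longrightarrow> is_walk E q \<Longrightarrow> is_walk E (p @ tl q)"
    and "hd (p @ tl q) = hd p" and "last (p @ tl q) = last q"
    and "set (p @ tl q) = set p \<union> set q"
proof -
  obtain c q' where q: "q = c # q'" using assms(2) by (cases q) auto
  have lp: "last p = c" using assms q by simp
  show "walk_weight w (p @ tl q) = walk_weight w p + walk_weight w q"
    using assms(1) lp unfolding q
  proof (induction p rule: induct_list012)
    case (3 a b r) then show ?case by simp
  qed auto
  show "is_walk E p \<Longrightarrow> is_walk E q \<Longrightarrow> is_walk E (p @ tl q)"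
    using assms(1) lp unfolding q
  proof (induction p rule: induct_list012)
    case (3 a b r) then show ?case by simp
  qed auto
  show "hd (p @ tl q) = hd p" using assms by simp
  show "last (p @ tl q) = last q" using assms q by (cases q') auto
  show "set (p @ tl q) = set p \<union> set q" using assms q by (cases p rule: rev_cases) auto
qed

lemma split_list_at: "n < length Q \<Longrightarrow> take (Suc n) Q @ tl (drop n Q) = Q"
  by (metis Cons_nth_drop_Suc append_take_drop_id list.sel(3))

lemma last_take_Suc: "n < length Q \<Longrightarrow> last (take (Suc n) Q) = Q ! n"
  by (simp add: take_Suc_conv_app_nth)

lemma ww_split: "n < length Q \<Longrightarrow>
   walk_weight w Q = walk_weight w (take (Suc n) Q) + walk_weight w (drop n Q)"
proof -
  assume n: "n < length Q"
  then have "Q \<noteq> []" by auto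
  then show ?thesis using n join_props(1)[of "take (Suc n) Q" "drop n Q" w] split_list_at[of n Q]
    by (simp add: last_take_Suc hd_drop_conv_nth)
qed

lemma is_walk_take: "is_walk E p \<Longrightarrow> 0 < n \<Longrightarrow> is_walk E (take n p)"
  unfolding is_walk_def by auto

lemma is_walk_drop: "is_walk E p \<Longrightarrow> n < length p \<Longrightarrow> is_walk E (drop n p)"
  unfolding is_walk_def by auto

lemma is_walk_rev: assumes sym: "\<And>a b. E a b \<Longrightarrow> E b a" and h: "is_walk E p" shows "is_walk E (rev p)"
  unfolding is_walk_def
proof (intro conjI allI impI)
  show "rev p \<noteq> []" using h unfolding is_walk_def by simp
  fix i assume i: "Suc i < length (rev p)"
  have "E (p ! (length p - Suc (Suc i))) (p ! Suc (length p - Suc (Suc i)))"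
    using h i unfolding is_walk_def by auto
  moreover have "Suc (length p - Suc (Suc i)) = length p - Suc i" using i by simp
  ultimately show "E (rev p ! i) (rev p ! Suc i)" using i sym by (auto simp: rev_nth)
qed

lemma ww_rev: "(\<And>a b. E a b \<Longrightarrow> w a b = w b a) \<Longrightarrow> is_walk E p \<Longrightarrow>
   walk_weight w (rev p) = walk_weight w p"
proof (induction p rule: induct_list012)
  case (3 a b r)
  have "walk_weight w (rev (a # b # r)) = walk_weight w (rev (b # r) @ tl [b, a])" by simp
  also have "\<dots> = walk_weight w (rev (b # r)) + walk_weight w [b, a]"
    by (rule join_props(1)) auto
  also have "\<dots> = walk_weight w (b # r) + w a b" using 3(3,4) 3(2)[OF 3(3)] 3(3)[of a b] by simp
  finally show ?case by simp
qed auto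

lemma ww_le: "is_walk E p \<Longrightarrow> (\<And>a b. E a b \<Longrightarrow> w a b \<le> M) \<Longrightarrow> walk_weight w p \<le> (length p - 1) * M"
proof (induction p rule: induct_list012)
  case (3 a b r)
  then have "w a b \<le> M" "walk_weight w (b # r) \<le> length r * M" by auto
  then show ?case by simp
qed auto

lemma ww_ge: "is_walk E p \<Longrightarrow> (\<And>a b. E a b \<Longrightarrow> 1 \<le> w a b) \<Longrightarrow> length p - 1 \<le> walk_weight w p"
proof (induction p rule: induct_list012)
  case (3 a b r)
  then have "1 \<le> w a b" "length r \<le> walk_weight w (b # r)" by auto
  then show ?case by simp
qed auto

lemma walk_set: "is_walk E p \<Longrightarrow> hd p \<in> V \<Longrightarrow> (\<And>u v. E u v \<Longrightarrow> u \<in> V \<and> v \<in> V) \<Longrightarrow> set p \<subseteq> V"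
proof (induction p rule: induct_list012)
  case (3 a b r)
  then show ?case by auto
qed auto

lemma gdist_le: "Q \<in> walks_avoiding E X u v \<Longrightarrow> gdist E w X u v \<le> enat (walk_weight w Q)"
  unfolding gdist_def by (rule INF_lower)

lemma gdist_ge: "(\<And>Q. Q \<in> walks_avoiding E X u v \<Longrightarrow> c \<le> enat (walk_weight w Q)) \<Longrightarrow> c \<le> gdist E w X u v"
  unfolding gdist_def by (rule INF_greatest)



lemma distinct_in_take: "distinct P \<Longrightarrow> k < length P \<Longrightarrow> P ! k \<in> set (take n P) \<longleftrightarrow> k < n"
proof
  assume d: "distinct P" and k: "k < length P" and m: "P ! k \<in> set (take n P)"
  then obtain m where "m < length (take n P)" "take n P ! m = P ! k" by (auto simp: in_set_conv_nth)
  then have "m < n" "m < length P" "P ! m = P ! k" by auto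
  then show "k < n" using d k nth_eq_iff_index_eq by metis
next
  assume "distinct P" "k < length P" "k < n"
  then show "P ! k \<in> set (take n P)" by (metis in_set_conv_nth length_take min_less_iff_conj nth_take)
qed

lemma distinct_in_drop: "distinct P \<Longrightarrow> k < length P \<Longrightarrow> P ! k \<in> set (drop n P) \<longleftrightarrow> n \<le> k"
proof
  assume d: "distinct P" and k: "k < length P" and m: "P ! k \<in> set (drop n P)"
  then obtain m where "m < length (drop n P)" "drop n P ! m = P ! k" by (auto simp: in_set_conv_nth)
  then have "n + m < length P" "P ! (n + m) = P ! k" by auto
  then show "n \<le> k" using d k nth_eq_iff_index_eq by (metis le_add1)
next
  assume "distinct P" "k < length P" "n \<le> k"
  then have "drop n P ! (k - n) = P ! k" "k - n < length (drop n P)" by auto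
  then show "P ! k \<in> set (drop n P)" by (metis nth_mem)
qed

lemma shortest_distinct:
  assumes Q: "Q \<in> walks_avoiding E X u v" and opt: "enat (walk_weight w Q) = gdist E w X u v"
    and w1: "\<And>a b. E a b \<Longrightarrow> 1 \<le> w a b"
  shows "distinct Q"
proof (rule ccontr)
  assume "\<not> distinct Q"
  then obtain i j where ij: "i < j" "j < length Q" "Q ! i = Q ! j"
    by (metis distinct_conv_nth linorder_neqE_nat)
  have wQ: "is_walk E Q" "hd Q = u" "last Q = v" "set Q \<inter> X = {}" using Q by (auto simp: walks_avoiding_def)
  have Qne: "Q \<noteq> []" using ij by auto
  define p where "p = take (Suc i) Q"
  define q where "q = drop j Q"
  have pne: "p \<noteq> []" "q \<noteq> []" using ij by (auto simp: p_def q_def)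
  have lp: "last p = hd q" using ij by (simp add: p_def q_def last_take_Suc hd_drop_conv_nth)
  have wp: "is_walk E p" using wQ by (simp add: p_def is_walk_take)
  have wq: "is_walk E q" using wQ ij by (simp add: q_def is_walk_drop)
  have Q'w: "p @ tl q \<in> walks_avoiding E X u v"
    unfolding walks_avoiding_def
  proof (intro CollectI conjI)
    show "is_walk E (p @ tl q)" using join_props(2)[OF pne lp wp wq] .
    show "hd (p @ tl q) = u" using join_props(3)[OF pne lp] wQ Qne by (simp add: p_def)
    show "last (p @ tl q) = v" using join_props(4)[OF pne lp] wQ ij by (simp add: q_def)
    have "set p \<subseteq> set Q" "set q \<subseteq> set Q" by (auto simp: p_def q_def dest: in_set_takeD in_set_dropD)
    then show "set (p @ tl q) \<inter> X = {}" using join_props(5)[OF pne lp] wQ by auto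
  qed
  have e1: "walk_weight w (p @ tl q) = walk_weight w p + walk_weight w q"
    using join_props(1)[OF pne lp] .
  have e2: "walk_weight w Q = walk_weight w p + walk_weight w (drop i Q)"
    using ww_split[of i Q w] ij by (simp add: p_def)
  have li: "j - i < length (drop i Q)" using ij by simp
  have e3: "walk_weight w (drop i Q) = walk_weight w (take (Suc (j - i)) (drop i Q)) + walk_weight w q"
    using ww_split[OF li, of w] ij by (simp add: q_def)
  have "is_walk E (take (Suc (j - i)) (drop i Q))"
    using wQ ij by (intro is_walk_take is_walk_drop) auto
  then have "length (take (Suc (j - i)) (drop i Q)) - 1 \<le> walk_weight w (take (Suc (j - i)) (drop i Q))"
    using ww_ge w1 by blast
  moreover have "length (take (Suc (j - i)) (drop i Q)) - 1 = j - i" using ij by simp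
  ultimately have "walk_weight w (p @ tl q) < walk_weight w Q" using e1 e2 e3 ij by linarith
  moreover have "gdist E w X u v \<le> enat (walk_weight w (p @ tl q))" using gdist_le[OF Q'w] .
  ultimately have "enat (walk_weight w Q) \<le> enat (walk_weight w (p @ tl q))" using opt by simp
  then show False using \<open>walk_weight w (p @ tl q) < walk_weight w Q\<close> by simp
qed



locale setting =
  fixes V :: "'a set" and E :: "'a \<Rightarrow> 'a \<Rightarrow> bool" and w :: "'a \<Rightarrow> 'a \<Rightarrow> nat"
    and M :: nat and s t x :: 'a and P :: "'a list" and R :: "'a \<Rightarrow> 'a list"
  assumes finV: "finite V"
    and E_V: "\<And>u v. E u v \<Longrightarrow> u \<in> V \<and> v \<in> V"
    and E_sym: "\<And>u v. E u v \<Longrightarrow> E v u"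
    and E_irrefl: "\<And>u. \<not> E u u"
    and w_sym: "\<And>u v. E u v \<Longrightarrow> w u v = w v u"
    and w_range: "\<And>u v. E u v \<Longrightarrow> 1 \<le> w u v \<and> w u v \<le> M"
    and s_V: "s \<in> V"
    and P_path: "P \<in> walks_avoiding E {} s t" "distinct P"
    and P_shortest: "enat (walk_weight w P) = gdist E w {} s t"
    and x_on_P: "x \<in> set P"
    and shape: "\<And>v Q. v \<in> set P \<Longrightarrow> v \<noteq> s \<Longrightarrow> replacement_path E w s t v Q
                  \<Longrightarrow> prefix_detour_suffix P Q"
    and R_repl: "\<And>v. v \<in> far_case_II E w P s t x \<Longrightarrow> replacement_path E w s t v (R v)"
    and R_greedy: "\<And>v. v \<in> far_case_II E w P s t x \<Longrightarrow>
        (\<exists>u \<in> far_case_II E w P s t x. gdist E w {} s u < gdist E w {} s v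
             \<and> replacement_path E w s t v (R u)) \<Longrightarrow>
        (\<exists>u \<in> far_case_II E w P s t x. gdist E w {} s u < gdist E w {} s v \<and> R v = R u)"
begin

abbreviation "F \<equiv> far_case_II E w P s t x"
abbreviation "ww \<equiv> walk_weight w"

lemma w1: "E a b \<Longrightarrow> 1 \<le> w a b" using w_range by blast
lemma wM: "E a b \<Longrightarrow> w a b \<le> M" using w_range by blast

lemma P_facts: "is_walk E P" "hd P = s" "last P = t" "P \<noteq> []"
  using P_path(1) by (auto simp: walks_avoiding_def is_walk_def)

definition pos :: "'a \<Rightarrow> nat" where "pos v = (LEAST i. P ! i = v)"

lemma pos_facts: assumes "v \<in> set P" shows "pos v < length P" "P ! pos v = v"
proof -
  obtain i where i: "i < length P" "P ! i = v" using assms by (auto simp: in_set_conv_nth)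
  have "pos v \<le> i" unfolding pos_def using i by (auto intro: Least_le)
  then show "pos v < length P" using i by simp
  show "P ! pos v = v" unfolding pos_def using i by (auto intro: LeastI)
qed

lemma pos_nth: "i < length P \<Longrightarrow> pos (P ! i) = i"
  using pos_facts[of "P ! i"] P_path(2) by (simp add: nth_eq_iff_index_eq)

lemma pos_inj: "u \<in> set P \<Longrightarrow> v \<in> set P \<Longrightarrow> pos u = pos v \<Longrightarrow> u = v"
  using pos_facts by metis

definition pw :: "nat \<Rightarrow> nat" where "pw i = ww (take (Suc i) P)"

lemma ww_P_split: "i < length P \<Longrightarrow> ww P = pw i + ww (drop i P)"
  unfolding pw_def by (rule ww_split)

lemma pw_mono: assumes "i < j" "j < length P" shows "pw i + (j - i) \<le> pw j"
proof -
  have l: "i < length (take (Suc j) P)" using assms by simp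
  have "pw j = pw i + ww (drop i (take (Suc j) P))"
    using ww_split[OF l, of w] assms by (simp add: pw_def min_def)
  moreover have "is_walk E (drop i (take (Suc j) P))"
    using P_facts(1) assms by (intro is_walk_take is_walk_drop) auto
  then have "length (drop i (take (Suc j) P)) - 1 \<le> ww (drop i (take (Suc j) P))"
    using ww_ge w1 by blast
  moreover have "length (drop i (take (Suc j) P)) - 1 = j - i" using assms by simp
  ultimately show ?thesis by linarith
qed

lemma dist_P: assumes i: "i < length P" shows "gdist E w {} s (P ! i) = enat (pw i)"
proof (rule antisym)
  have "take (Suc i) P \<in> walks_avoiding E {} s (P ! i)"
    unfolding walks_avoiding_def using P_facts i
    by (auto simp: is_walk_take last_take_Suc hd_take)
  then show "gdist E w {} s (P ! i) \<le> enat (pw i)" unfolding pw_def by (rule gdist_le)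
next
  show "enat (pw i) \<le> gdist E w {} s (P ! i)"
  proof (rule gdist_ge)
    fix W assume W: "W \<in> walks_avoiding E {} s (P ! i)"
    have Wf: "is_walk E W" "hd W = s" "last W = P ! i" "W \<noteq> []"
      using W by (auto simp: walks_avoiding_def is_walk_def)
    have dne: "drop i P \<noteq> []" using i by simp
    have lh: "last W = hd (drop i P)" using Wf i by (simp add: hd_drop_conv_nth)
    have "W @ tl (drop i P) \<in> walks_avoiding E {} s t"
      unfolding walks_avoiding_def
      using join_props(2)[OF Wf(4) dne lh Wf(1) is_walk_drop[OF P_facts(1) i]]
        join_props(3)[OF Wf(4) dne lh] join_props(4)[OF Wf(4) dne lh] Wf P_facts i
      by (auto simp: last_drop)
    then have "gdist E w {} s t \<le> enat (ww (W @ tl (drop i P)))" by (rule gdist_le)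
    then have "enat (ww P) \<le> enat (ww W + ww (drop i P))"
      using P_shortest join_props(1)[OF Wf(4) dne lh, of w] by simp
    then have "ww P \<le> ww W + ww (drop i P)" by simp
    then show "enat (pw i) \<le> enat (ww W)" using ww_P_split[OF i] by simp
  qed
qed

lemma dist_order: assumes "u \<in> set P" "v \<in> set P"
  shows "gdist E w {} s u < gdist E w {} s v \<longleftrightarrow> pos u < pos v"
proof -
  have u: "gdist E w {} s u = enat (pw (pos u))" using dist_P[of "pos u"] pos_facts[OF assms(1)] by simp
  have v: "gdist E w {} s v = enat (pw (pos v))" using dist_P[of "pos v"] pos_facts[OF assms(2)] by simp
  have "pos u < pos v \<Longrightarrow> pw (pos u) < pw (pos v)" using pw_mono pos_facts[OF assms(2)] by fastforce
  moreover have "pos v < pos u \<Longrightarrow> pw (pos v) < pw (pos u)" using pw_mono pos_facts[OF assms(1)] by fastforce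
  ultimately show ?thesis unfolding u v by (metis enat_ord_simps(2) less_asym' linorder_neqE_nat)
qed

lemma F_facts: assumes "v \<in> F"
  shows "v \<in> set P" "v \<noteq> s" "pos v \<le> pos x"
    "gdist E w {v} s t < gdist E w {v} s x + gdist E w {} x t"
proof -
  have px: "pos x < length P" "P ! pos x = x" using pos_facts[OF x_on_P] by auto
  have tw: "takeWhile (\<lambda>u. u \<noteq> x) P = take (pos x) P"
  proof (rule takeWhile_eq_take_P_nth)
    fix i assume "i < pos x" "i < length P"
    then show "P ! i \<noteq> x" using px P_path(2) by (metis nth_eq_iff_index_eq less_irrefl)
  qed (use px in simp)
  have vs: "v \<in> set (take (pos x) P @ [x])" using assms tw by (simp add: far_case_II_def subpath_to_def)
  then show "v \<in> set P" using x_on_P by (auto dest: in_set_takeD)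
  show "v \<noteq> s" "gdist E w {v} s t < gdist E w {v} s x + gdist E w {} x t"
    using assms by (auto simp: far_case_II_def)
  show "pos v \<le> pos x"
  proof (cases "v = x")
    case False
    then have "v \<in> set (take (pos x) P)" using vs by simp
    then obtain i where "i < pos x" "P ! i = v" by (auto simp: in_set_conv_nth)
    then show ?thesis using pos_nth px by fastforce
  qed simp
qed

end


context setting begin

definition L :: "'a \<Rightarrow> nat" where "L v = ww (R v)"

lemma R_facts: assumes "v \<in> F"
  shows "R v \<in> walks_avoiding E {v} s t" "enat (L v) = gdist E w {v} s t" "distinct (R v)"
    "ww P \<le> L v" "is_walk E (R v)" "hd (R v) = s" "last (R v) = t" "v \<notin> set (R v)" "R v \<noteq> []"
proof -
  show r: "R v \<in> walks_avoiding E {v} s t" "enat (L v) = gdist E w {v} s t"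
    using R_repl[OF assms] by (auto simp: replacement_path_def L_def)
  show "distinct (R v)" using shortest_distinct[OF r(1), of w] r(2) w1 unfolding L_def by blast
  have "R v \<in> walks_avoiding E {} s t" using r(1) by (auto simp: walks_avoiding_def)
  then have "gdist E w {} s t \<le> enat (L v)" unfolding L_def by (rule gdist_le)
  then show "ww P \<le> L v" using P_shortest by (metis enat_ord_simps(1))
  show "is_walk E (R v)" "hd (R v) = s" "last (R v) = t" "v \<notin> set (R v)" "R v \<noteq> []"
    using r(1) by (auto simp: walks_avoiding_def is_walk_def)
qed

lemma x_notin: assumes "v \<in> F" shows "x \<notin> set (R v)"
proof
  assume "x \<in> set (R v)"
  then obtain p where p: "p < length (R v)" "R v ! p = x" by (auto simp: in_set_conv_nth)
  note Rf = R_facts[OF assms]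
  have "take (Suc p) (R v) \<in> walks_avoiding E {v} s x"
    unfolding walks_avoiding_def using Rf p
    by (auto simp: is_walk_take last_take_Suc hd_take dest: in_set_takeD)
  then have a: "gdist E w {v} s x \<le> enat (ww (take (Suc p) (R v)))" by (rule gdist_le)
  have "drop p (R v) \<in> walks_avoiding E {} x t"
    unfolding walks_avoiding_def using Rf p
    by (auto simp: is_walk_drop hd_drop_conv_nth last_drop)
  then have b: "gdist E w {} x t \<le> enat (ww (drop p (R v)))" by (rule gdist_le)
  have "gdist E w {v} s x + gdist E w {} x t \<le> enat (ww (take (Suc p) (R v))) + enat (ww (drop p (R v)))"
    using a b by (rule add_mono)
  also have "\<dots> = enat (L v)" using ww_split[OF p(1), of w] by (simp add: L_def)
  finally show False using F_facts(4)[OF assms] Rf(2) by simp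
qed

definition dec :: "'a \<Rightarrow> nat \<times> nat \<times> 'a list" where
  "dec v = (SOME (i, j, D). i < j \<and> j < length P \<and> R v = take (Suc i) P @ D @ drop j P \<and> set D \<inter> set P = {})"

definition ai :: "'a \<Rightarrow> nat" where "ai v = fst (dec v)"
definition bj :: "'a \<Rightarrow> nat" where "bj v = fst (snd (dec v))"
definition Dt :: "'a \<Rightarrow> 'a list" where "Dt v = snd (snd (dec v))"

lemma dec_basic: assumes "v \<in> F"
  shows "ai v < bj v" "bj v < length P" "R v = take (Suc (ai v)) P @ Dt v @ drop (bj v) P"
    "set (Dt v) \<inter> set P = {}"
proof -
  have "prefix_detour_suffix P (R v)"
    using shape F_facts[OF assms] R_repl[OF assms] by blast
  then have ex: "\<exists>ijD. (\<lambda>(i, j, D). i < j \<and> j < length P \<and> R v = take (Suc i) P @ D @ drop j P \<and> set D \<inter> set P = {}) ijD"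
    unfolding prefix_detour_suffix_def by auto
  have "(\<lambda>(i, j, D). i < j \<and> j < length P \<and> R v = take (Suc i) P @ D @ drop j P \<and> set D \<inter> set P = {}) (dec v)"
    unfolding dec_def by (rule someI_ex[OF ex])
  then show "ai v < bj v" "bj v < length P" "R v = take (Suc (ai v)) P @ Dt v @ drop (bj v) P"
    "set (Dt v) \<inter> set P = {}"
    unfolding ai_def bj_def Dt_def by (auto split: prod.splits)
qed

lemma mem_R: assumes "v \<in> F" "k < length P"
  shows "P ! k \<in> set (R v) \<longleftrightarrow> (k \<le> ai v \<or> bj v \<le> k)"
proof -
  note d = dec_basic[OF assms(1)]
  have "P ! k \<notin> set (Dt v)" using d(4) assms(2) by (auto dest: nth_mem)
  then have "P ! k \<in> set (R v) \<longleftrightarrow> P ! k \<in> set (take (Suc (ai v)) P) \<or> P ! k \<in> set (drop (bj v) P)"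
    by (subst d(3)) auto
  also have "\<dots> \<longleftrightarrow> (k \<le> ai v \<or> bj v \<le> k)"
    using distinct_in_take[OF P_path(2) assms(2)] distinct_in_drop[OF P_path(2) assms(2)] by auto
  finally show ?thesis .
qed

lemma dec_pos: assumes "v \<in> F" shows "ai v < pos v" "pos v < bj v" "ai v < pos x" "pos x < bj v"
proof -
  have pv: "pos v < length P" "P ! pos v = v" using pos_facts F_facts(1)[OF assms] by auto
  have px: "pos x < length P" "P ! pos x = x" using pos_facts x_on_P by auto
  show "ai v < pos v" "pos v < bj v" using mem_R[OF assms pv(1)] pv(2) R_facts(8)[OF assms] by auto
  show "ai v < pos x" "pos x < bj v" using mem_R[OF assms px(1)] px(2) x_notin[OF assms] by auto
qed

lemma notin_R: assumes "u \<in> F" "v \<in> set P" "ai u < pos v" "pos v < bj u" shows "v \<notin> set (R u)"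
  using mem_R[OF assms(1), of "pos v"] pos_facts[OF assms(2)] assms by auto

lemma notin_R_F: assumes "u \<in> F" "v \<in> F" "pos u \<le> pos v" shows "v \<notin> set (R u)"
  using notin_R[OF assms(1) F_facts(1)[OF assms(2)]] dec_pos[OF assms(1)] F_facts(3)[OF assms(2)] assms(3)
  by linarith

lemma avoid_walk: assumes "u \<in> F" "v \<notin> set (R u)" shows "R u \<in> walks_avoiding E {v} s t"
  using R_facts(1)[OF assms(1)] assms(2) by (auto simp: walks_avoiding_def)

definition Nn :: "'a set" where "Nn = {v \<in> F. \<forall>u \<in> F. pos u < pos v \<longrightarrow> R u \<noteq> R v}"

lemma L_less: assumes u: "u \<in> F" and v: "v \<in> Nn" and uv: "pos u < pos v" shows "L v < L u"
proof -
  have vF: "v \<in> F" using v by (simp add: Nn_def)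
  have av: "R u \<in> walks_avoiding E {v} s t" using avoid_walk[OF u notin_R_F[OF u vF]] uv by simp
  then have le: "enat (L v) \<le> enat (L u)" using gdist_le[OF av, of w] R_facts(2)[OF vF] by (simp add: L_def)
  have "\<not> replacement_path E w s t v (R u)"
  proof
    assume rp: "replacement_path E w s t v (R u)"
    have "gdist E w {} s u < gdist E w {} s v"
      using dist_order F_facts(1) u vF uv by blast
    then obtain u' where u': "u' \<in> F" "gdist E w {} s u' < gdist E w {} s v" "R v = R u'"
      using R_greedy[OF vF] u rp by blast
    have "pos u' < pos v" using dist_order F_facts(1) u'(1,2) vF by blast
    then show False using v u' by (auto simp: Nn_def)
  qed
  then have "enat (L u) \<noteq> gdist E w {v} s t" using av by (simp add: replacement_path_def L_def)
  then have "L v \<noteq> L u" using R_facts(2)[OF vF] by auto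
  then show ?thesis using le by simp
qed

lemma ai_ge: assumes u: "u \<in> F" and v: "v \<in> Nn" and uv: "pos u < pos v" shows "pos u \<le> ai v"
proof (rule ccontr)
  assume "\<not> pos u \<le> ai v"
  have vF: "v \<in> F" using v by (simp add: Nn_def)
  have "u \<notin> set (R v)"
    using notin_R[OF vF F_facts(1)[OF u]] \<open>\<not> pos u \<le> ai v\<close> uv dec_pos[OF vF] by linarith
  then have av: "R v \<in> walks_avoiding E {u} s t" using avoid_walk[OF vF] by simp
  then have "enat (L u) \<le> enat (L v)" using gdist_le[OF av, of w] R_facts(2)[OF u] by (simp add: L_def)
  then show False using L_less[OF u v uv] by simp
qed

end


lemma ww_split3: assumes "a \<le> b" "b < length Q"
  shows "walk_weight w Q = walk_weight w (take (Suc a) Q) + walk_weight w (drop a (take (Suc b) Q)) + walk_weight w (drop b Q)"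
proof -
  have "walk_weight w Q = walk_weight w (take (Suc b) Q) + walk_weight w (drop b Q)"
    using ww_split[OF assms(2)] .
  moreover have "a < length (take (Suc b) Q)" using assms by simp
  then have "walk_weight w (take (Suc b) Q) = walk_weight w (take (Suc a) (take (Suc b) Q)) + walk_weight w (drop a (take (Suc b) Q))"
    by (rule ww_split)
  moreover have "take (Suc a) (take (Suc b) Q) = take (Suc a) Q" using assms by (simp add: min_def)
  ultimately show ?thesis by simp
qed

lemma drop_take_single: "i < length P \<Longrightarrow> drop i (take (Suc i) P) = [P ! i]"
  by (simp add: take_Suc_conv_app_nth)

context setting begin

lemma R_struct: assumes v: "v \<in> F"
  shows "length (R v) = Suc (ai v) + length (Dt v) + (length P - bj v)"
    "take (Suc (ai v)) (R v) = take (Suc (ai v)) P"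
    "\<And>l. l \<le> length (Dt v) \<Longrightarrow> take (Suc (ai v) + l) (R v) = take (Suc (ai v)) P @ take l (Dt v)"
    "\<And>l. l \<le> length (Dt v) \<Longrightarrow> drop (ai v) (take (Suc (ai v) + l) (R v)) = P ! ai v # take l (Dt v)"
    "R v ! (Suc (ai v) + length (Dt v)) = P ! bj v"
    "drop (Suc (ai v) + length (Dt v)) (R v) = drop (bj v) P"
    "\<And>l. l < length (Dt v) \<Longrightarrow> R v ! (Suc (ai v) + l) = Dt v ! l"
proof -
  note d = dec_basic[OF v]
  have ai_lt: "Suc (ai v) \<le> length P" using d by simp
  have lt: "length (take (Suc (ai v)) P) = Suc (ai v)" using d by simp
  show "length (R v) = Suc (ai v) + length (Dt v) + (length P - bj v)"
    using d(1,2) by (simp add: d(3) lt ai_lt)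
  show "take (Suc (ai v)) (R v) = take (Suc (ai v)) P" by (subst d(3)) (simp add: lt ai_lt)
  show t: "\<And>l. l \<le> length (Dt v) \<Longrightarrow> take (Suc (ai v) + l) (R v) = take (Suc (ai v)) P @ take l (Dt v)"
    by (subst d(3)) (simp add: lt ai_lt)
  show "\<And>l. l \<le> length (Dt v) \<Longrightarrow> drop (ai v) (take (Suc (ai v) + l) (R v)) = P ! ai v # take l (Dt v)"
    using d by (simp add: t drop_take_single)
  show "R v ! (Suc (ai v) + length (Dt v)) = P ! bj v"
    using d by (subst d(3)) (simp add: lt ai_lt nth_append)
  show "drop (Suc (ai v) + length (Dt v)) (R v) = drop (bj v) P"
    using d by (subst d(3)) (simp add: lt ai_lt)
  show "\<And>l. l < length (Dt v) \<Longrightarrow> R v ! (Suc (ai v) + l) = Dt v ! l"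
    using d by (subst d(3)) (simp add: lt ai_lt nth_append)
qed

definition Dl :: "'a \<Rightarrow> nat" where "Dl v = L v - ww P"

definition S :: "'a \<Rightarrow> 'a set" where
  "S v = {R v ! q | q. ai v < q \<and> q \<le> ai v + length (Dt v) \<and>
            2 * ww (drop (ai v) (take (Suc q) (R v))) < Dl v}"

lemma S_sub: assumes v: "v \<in> F" shows "S v \<subseteq> set (Dt v)" "S v \<subseteq> set (R v)" "finite (S v)"
proof -
  show a: "S v \<subseteq> set (Dt v)"
  proof
    fix z assume "z \<in> S v"
    then obtain q where q: "z = R v ! q" "ai v < q" "q \<le> ai v + length (Dt v)" unfolding S_def by blast
    then have "q = Suc (ai v) + (q - Suc (ai v))" "q - Suc (ai v) < length (Dt v)" by auto
    then have "z = Dt v ! (q - Suc (ai v))" using R_struct(7)[OF v] q(1) by metis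
    then show "z \<in> set (Dt v)" using \<open>q - Suc (ai v) < length (Dt v)\<close> by simp
  qed
  have "set (Dt v) \<subseteq> set (R v)" using dec_basic(3)[OF v] by (metis Un_upper1 Un_upper2 set_append subset_trans)
  then show "S v \<subseteq> set (R v)" using a by blast
  show "finite (S v)" using a finite_subset by blast
qed

lemma key: assumes u: "u \<in> F" and v: "v \<in> F" and uv: "pos u < ai v"
  shows "S v \<inter> set (R u) = {}"
proof (rule ccontr)
  assume "S v \<inter> set (R u) \<noteq> {}"
  then obtain z where zS: "z \<in> S v" and zu: "z \<in> set (R u)" by blast
  obtain q where q: "z = R v ! q" "ai v < q" "q \<le> ai v + length (Dt v)"
    and qd: "2 * ww (drop (ai v) (take (Suc q) (R v))) < Dl v" using zS unfolding S_def by blast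
  obtain p where p: "p < length (R u)" "R u ! p = z" using zu by (auto simp: in_set_conv_nth)
  note Ru = R_facts[OF u] and Rv = R_facts[OF v]
  note dv = dec_basic[OF v] and dpv = dec_pos[OF v]
  define i where "i = ai v"
  define l where "l = q - i"
  have l: "l \<le> length (Dt v)" "q = Suc i + (l - 1)" "Suc i + l = Suc q" "0 < l" using q by (auto simp: l_def i_def)
  have ilen: "i < length P" using dv by (simp add: i_def)
  define Cv where "Cv = P ! i # take l (Dt v)"
  define pre where "pre = take (Suc q) (R v)"
  have pre_eq: "pre = take (Suc i) P @ take l (Dt v)"
    using R_struct(3)[OF v l(1)] l(3) by (simp add: pre_def i_def)
  have Cv_eq: "Cv = drop i pre"
    using R_struct(4)[OF v l(1)] l(3) by (simp add: pre_def i_def Cv_def)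
  have qlen: "q < length (R v)" using R_struct(1)[OF v] q by (simp)
  have pre_walk: "is_walk E pre" using Rv(5) by (simp add: pre_def is_walk_take)
  have ipre: "i < length pre" using pre_eq ilen by simp
  have Cv_walk: "is_walk E Cv" using is_walk_drop[OF pre_walk ipre] Cv_eq by simp
  have last_pre: "last pre = z" using q qlen by (simp add: pre_def last_take_Suc)
  have last_Cv: "last Cv = z" using last_pre Cv_eq ipre by (simp add: last_drop)
  have hd_Cv: "hd Cv = P ! i" by (simp add: Cv_def)
  have hd_pre: "hd pre = s" using Rv(6,9) by (simp add: pre_def hd_take)
  have pre_w: "ww pre = pw i + ww Cv"
  proof -
    have "i < length pre" using pre_eq ilen by simp
    then have "ww pre = ww (take (Suc i) pre) + ww (drop i pre)" by (rule ww_split)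
    moreover have "take (Suc i) pre = take (Suc i) P" using pre_eq ilen by simp
    ultimately show ?thesis using Cv_eq by (simp add: pw_def)
  qed
  define Au where "Au = take (Suc p) (R u)"
  define Bu where "Bu = drop p (R u)"
  have Lu: "L u = ww Au + ww Bu" using ww_split[OF p(1)] by (simp add: L_def Au_def Bu_def)
  have Au_f: "is_walk E Au" "Au \<noteq> []" "hd Au = s" "last Au = z" "set Au \<subseteq> set (R u)"
    using Ru p by (auto simp: Au_def is_walk_take hd_take last_take_Suc dest: in_set_takeD)
  have Bu_f: "is_walk E Bu" "Bu \<noteq> []" "hd Bu = z" "last Bu = t" "set Bu \<subseteq> set (R u)"
    using Ru p by (auto simp: Bu_def is_walk_drop hd_drop_conv_nth last_drop dest: in_set_dropD)
  define Q1a where "Q1a = Au @ tl (rev Cv)"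
  have rC: "rev Cv \<noteq> []" "is_walk E (rev Cv)" "hd (rev Cv) = z" "last (rev Cv) = P ! i"
  proof -
    show "rev Cv \<noteq> []" by (simp add: Cv_def)
    show "is_walk E (rev Cv)" using is_walk_rev[OF E_sym Cv_walk] by blast
    show "hd (rev Cv) = z" using last_Cv by (simp add: hd_rev)
    show "last (rev Cv) = P ! i" using hd_Cv by (simp add: last_rev)
  qed
  have j1: "last Au = hd (rev Cv)" using Au_f rC by simp
  have Q1a_f: "is_walk E Q1a" "Q1a \<noteq> []" "hd Q1a = s" "last Q1a = P ! i" "set Q1a = set Au \<union> set Cv"
    "ww Q1a = ww Au + ww Cv"
    using join_props[OF Au_f(2) rC(1) j1] Au_f rC ww_rev[OF w_sym Cv_walk]
    by (auto simp: Q1a_def)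
  have dP: "drop i P \<noteq> []" "is_walk E (drop i P)" "hd (drop i P) = P ! i" "last (drop i P) = t"
    using ilen P_facts by (auto simp: is_walk_drop hd_drop_conv_nth last_drop)
  have j2: "last Q1a = hd (drop i P)" using Q1a_f dP by simp
  define Q1 where "Q1 = Q1a @ tl (drop i P)"
  have Q1_f: "is_walk E Q1" "hd Q1 = s" "last Q1 = t" "set Q1 = set Au \<union> set Cv \<union> set (drop i P)"
    "ww Q1 = ww Au + ww Cv + ww (drop i P)"
    using join_props(1)[OF Q1a_f(2) dP(1) j2, of w] join_props(2-5)[OF Q1a_f(2) dP(1) j2] Q1a_f dP by (auto simp: Q1_def)
  have uP: "u \<in> set P" "pos u < length P" "P ! pos u = u" using F_facts(1)[OF u] pos_facts by auto
  have "u \<notin> set Au" using Au_f Ru(8) by blast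
  moreover have "u \<notin> set Cv"
  proof -
    have "u \<noteq> P ! i" using uP uv pos_nth ilen by (metis i_def less_irrefl)
    moreover have "u \<notin> set (Dt v)" using dv(4) uP by blast
    ultimately show ?thesis by (auto simp: Cv_def dest: in_set_takeD)
  qed
  moreover have "u \<notin> set (drop i P)"
    using distinct_in_drop[OF P_path(2) uP(2)] uP uv by (simp add: i_def)
  ultimately have "u \<notin> set Q1" using Q1_f(4) by blast
  then have "Q1 \<in> walks_avoiding E {u} s t" using Q1_f by (auto simp: walks_avoiding_def)
  then have "enat (L u) \<le> enat (ww Q1)" using gdist_le[of Q1 E "{u}" s t w] Ru(2) by simp
  then have ineq1: "L u \<le> ww Au + ww Cv + ww (drop i P)" using Q1_f by simp
  have pre_ne: "pre \<noteq> []" using ipre by auto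
  have j3: "last pre = hd Bu" using last_pre Bu_f by simp
  define Q2 where "Q2 = pre @ tl Bu"
  have Q2_f: "is_walk E Q2" "hd Q2 = s" "last Q2 = t" "set Q2 = set pre \<union> set Bu" "ww Q2 = ww pre + ww Bu"
    using join_props(1)[OF pre_ne Bu_f(2) j3, of w] join_props(2-5)[OF pre_ne Bu_f(2) j3] pre_walk Bu_f hd_pre by (auto simp: Q2_def)
  have "v \<notin> set pre" using Rv(8) by (auto simp: pre_def dest: in_set_takeD)
  moreover have "v \<notin> set (R u)" using notin_R_F[OF u v] uv dpv by (simp add: i_def)
  ultimately have "v \<notin> set Q2" using Q2_f(4) Bu_f(5) by blast
  then have "Q2 \<in> walks_avoiding E {v} s t" using Q2_f by (auto simp: walks_avoiding_def)
  then have "enat (L v) \<le> enat (ww Q2)" using gdist_le[of Q2 E "{v}" s t w] Rv(2) by simp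
  then have ineq2: "L v \<le> pw i + ww Cv + ww Bu" using Q2_f pre_w by simp
  have "ww P = pw i + ww (drop i P)" using ww_P_split[OF ilen] .
  then have "L v \<le> ww P + 2 * ww Cv" using ineq1 ineq2 Lu by linarith
  moreover have "ww (drop (ai v) (take (Suc q) (R v))) = ww Cv" using Cv_eq by (simp add: pre_def i_def)
  ultimately show False using qd by (simp add: Dl_def)
qed

lemma seg_walk_le: assumes "is_walk E Q" "a \<le> b" "b < length Q"
  shows "ww (drop a (take (Suc b) Q)) \<le> (b - a) * M" "b - a \<le> ww (drop a (take (Suc b) Q))"
proof -
  have wk: "is_walk E (drop a (take (Suc b) Q))" using assms by (intro is_walk_drop is_walk_take) auto
  have len: "length (drop a (take (Suc b) Q)) - 1 = b - a" using assms by simp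
  show "ww (drop a (take (Suc b) Q)) \<le> (b - a) * M" using ww_le[OF wk wM] len by simp
  show "b - a \<le> ww (drop a (take (Suc b) Q))" using ww_ge[OF wk w1] len by simp
qed

lemma S_card: assumes v: "v \<in> F" and M1: "1 \<le> M" shows "Dl v \<le> 2 * M * (card (S v) + 1)"
proof -
  note d = dec_basic[OF v] and Rv = R_facts[OF v]
  define i where "i = ai v"
  define K where "K = Suc i + length (Dt v)"
  define c where "c = (Dl v - 1) div (2 * M)"
  have Klen: "K < length (R v)" using R_struct(1)[OF v] d by (simp add: K_def i_def)
  have iK: "i \<le> K" by (simp add: K_def)
  have e1: "L v = pw i + ww (drop i (take (Suc K) (R v))) + ww (drop (bj v) P)"
    using ww_split3[OF iK Klen, of w] R_struct(2,6)[OF v] by (simp add: L_def pw_def K_def i_def)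
  have ib: "i \<le> bj v" using d by (simp add: i_def)
  have e2: "ww P = pw i + ww (drop i (take (Suc (bj v)) P)) + ww (drop (bj v) P)"
    using ww_split3[OF ib d(2), of w] by (simp add: pw_def)
  have e3: "bj v - i \<le> ww (drop i (take (Suc (bj v)) P))"
    using seg_walk_le(2)[OF P_facts(1) ib d(2)] .
  have bi: "1 \<le> bj v - i" using d by (simp add: i_def)
  have big: "Dl v + 1 \<le> ww (drop i (take (Suc K) (R v)))"
    using e1 e2 e3 bi Rv(4) by (simp add: Dl_def)
  have small: "ww (drop i (take (Suc K) (R v))) \<le> (length (Dt v) + 1) * M"
    using seg_walk_le(1)[OF Rv(5) iK Klen] by (simp add: K_def)
  have cM: "c * (2 * M) \<le> Dl v - 1" unfolding c_def by (rule div_times_less_eq_dividend)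
  have cD: "c \<le> length (Dt v)"
  proof (rule ccontr)
    assume "\<not> c \<le> length (Dt v)"
    then have "length (Dt v) + 1 \<le> c" by simp
    then have "(length (Dt v) + 1) * M \<le> c * M" by (rule mult_le_mono1)
    then show False using big small cM by (simp add: algebra_simps)
  qed
  define f where "f = (\<lambda>l. R v ! (i + l))"
  have sub: "f ` {1..c} \<subseteq> S v"
  proof
    fix z assume "z \<in> f ` {1..c}"
    then obtain l where l: "1 \<le> l" "l \<le> c" "z = R v ! (i + l)" by (auto simp: f_def)
    have ql: "i + l < length (R v)" using l cD Klen by (simp add: K_def)
    have "ww (drop i (take (Suc (i + l)) (R v))) \<le> l * M"
      using seg_walk_le(1)[OF Rv(5) _ ql, of i] by simp
    moreover have "l * M \<le> c * M" using l by simp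
    ultimately have "ww (drop i (take (Suc (i + l)) (R v))) \<le> c * M" by (rule le_trans)
    then have a1: "2 * ww (drop i (take (Suc (i + l)) (R v))) \<le> c * (2 * M)" by simp
    have "1 * (2 * 1) \<le> c * (2 * M)" using l M1 by (intro mult_le_mono) auto
    then have "2 * ww (drop i (take (Suc (i + l)) (R v))) < Dl v" using a1 cM by linarith
    then show "z \<in> S v" unfolding S_def using l cD by (auto simp: i_def)
  qed
  have inj: "inj_on f {1..c}"
  proof (rule inj_onI)
    fix a b assume ab: "a \<in> {1..c}" "b \<in> {1..c}" "f a = f b"
    have "i + a < length (R v)" "i + b < length (R v)" using ab cD Klen by (auto simp: K_def)
    then show "a = b" using ab Rv(3) by (simp add: f_def nth_eq_iff_index_eq)
  qed
  have "c \<le> card (S v)" using card_mono[OF S_sub(3)[OF v] sub] card_image[OF inj] by simp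
  moreover have "Dl v \<le> 2 * M * (c + 1)"
  proof -
    have "Dl v - 1 = c * (2 * M) + (Dl v - 1) mod (2 * M)" unfolding c_def by (rule div_mult_mod_eq[symmetric])
    moreover have "(Dl v - 1) mod (2 * M) < 2 * M" using M1 by simp
    ultimately show ?thesis by (simp add: algebra_simps)
  qed
  ultimately show ?thesis by (meson le_trans add_le_mono1 mult_le_mono2)
qed

end


lemma sum_distinct_nat: "finite A \<Longrightarrow> card A * (card A - 1) \<le> 2 * (\<Sum>a\<in>A. (a::nat))"
proof (induction "card A" arbitrary: A)
  case 0 then show ?case by simp
next
  case (Suc n)
  then have ne: "A \<noteq> {}" by auto
  define m where "m = Max A"
  have mA: "m \<in> A" using Suc.prems ne by (simp add: m_def)
  have cA: "card (A - {m}) = n" using Suc.hyps(2) mA Suc.prems by simp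
  have IH: "n * (n - 1) \<le> 2 * (\<Sum>a\<in>A - {m}. a)" using Suc.hyps(1)[of "A - {m}"] cA Suc.prems by simp
  have "A \<subseteq> {0..m}" using Suc.prems by (auto simp: m_def)
  then have "card A \<le> Suc m" using card_mono[of "{0..m}" A] by simp
  then have nm: "n \<le> m" using Suc.hyps(2) by simp
  have "(\<Sum>a\<in>A. a) = m + (\<Sum>a\<in>A - {m}. a)" using Suc.prems mA by (simp add: sum.remove)
  moreover have "Suc n * n = n * (n - 1) + 2 * n" by (cases n) auto
  ultimately show ?case using IH nm Suc.hyps(2)[symmetric] by simp
qed

context setting begin

lemma P_V: "set P \<subseteq> V" using walk_set[OF P_facts(1) _ E_V] P_facts(2) s_V by simp

lemma R_V: "v \<in> F \<Longrightarrow> set (R v) \<subseteq> V" using walk_set[OF R_facts(5) _ E_V] R_facts(6) s_V by simp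

lemma Nn_F: "Nn \<subseteq> F" by (auto simp: Nn_def)

lemma mult2: "card {v \<in> Nn. z \<in> S v} \<le> 2"
proof (rule ccontr)
  define Z where "Z = {v \<in> Nn. z \<in> S v}"
  assume "\<not> card {v \<in> Nn. z \<in> S v} \<le> 2"
  then have "3 \<le> card Z" by (simp add: Z_def)
  then obtain B where B: "B \<subseteq> Z" "card B = 3" by (meson obtain_subset_with_card_n)
  then obtain a b c where abc: "B = {a, b, c}" "a \<noteq> b" "b \<noteq> c" "a \<noteq> c" by (auto simp: card_3_iff)
  have H: "False" if u: "u \<in> Z" and v: "v \<in> Z" and ww': "w' \<in> Z" and uv: "pos u < pos v" and vw: "pos v < pos w'" for u v w'
  proof -
    have uF: "u \<in> F" "v \<in> F" "w' \<in> F" "w' \<in> Nn" using u v ww' Nn_F by (auto simp: Z_def)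
    have "pos v \<le> ai w'" using ai_ge[OF uF(2) uF(4) vw] .
    then have "S w' \<inter> set (R u) = {}" using key[OF uF(1) uF(3)] uv by simp
    moreover have "z \<in> S w'" "z \<in> S u" using u ww' by (auto simp: Z_def)
    ultimately show False using S_sub(2)[OF uF(1)] by blast
  qed
  have inZ: "a \<in> Z" "b \<in> Z" "c \<in> Z" using B abc by auto
  have inP: "a \<in> set P" "b \<in> set P" "c \<in> set P" using inZ Nn_F F_facts(1) by (auto simp: Z_def)
  have "pos a \<noteq> pos b" "pos b \<noteq> pos c" "pos a \<noteq> pos c" using abc pos_inj inP by metis+
  moreover have "\<not> (pos a < pos b \<and> pos b < pos c)" "\<not> (pos a < pos c \<and> pos c < pos b)"
    "\<not> (pos b < pos a \<and> pos a < pos c)" "\<not> (pos b < pos c \<and> pos c < pos a)"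
    "\<not> (pos c < pos a \<and> pos a < pos b)" "\<not> (pos c < pos b \<and> pos b < pos a)"
    using H inZ by blast+
  ultimately show False by linarith
qed

lemma finite_Nn: "finite Nn" using Nn_F F_facts(1) finite_subset[of _ "set P"] by blast

lemma sum_S: "(\<Sum>v\<in>Nn. card (S v)) \<le> 2 * card V"
proof -
  have SV: "S v \<subseteq> V" if "v \<in> Nn" for v using S_sub(2) R_V Nn_F that by blast
  have "(\<Sum>v\<in>Nn. card (S v)) = (\<Sum>v\<in>Nn. \<Sum>z\<in>V. if z \<in> S v then 1 else 0)"
  proof (rule sum.cong[OF refl])
    fix v assume "v \<in> Nn"
    have "(\<Sum>z\<in>V. if z \<in> S v then 1 else 0) = card {z \<in> V. z \<in> S v}"
      using sum.inter_filter[OF finV, of "\<lambda>_. 1::nat" "\<lambda>z. z \<in> S v"] by simp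
    also have "{z \<in> V. z \<in> S v} = S v" using SV[OF \<open>v \<in> Nn\<close>] by blast
    finally show "card (S v) = (\<Sum>z\<in>V. if z \<in> S v then 1 else 0)" by simp
  qed
  also have "\<dots> = (\<Sum>z\<in>V. \<Sum>v\<in>Nn. if z \<in> S v then 1 else 0)" by (rule sum.swap)
  also have "\<dots> = (\<Sum>z\<in>V. card {v \<in> Nn. z \<in> S v})"
    using sum.inter_filter[OF finite_Nn, of "\<lambda>_. 1::nat"] by simp
  also have "\<dots> \<le> (\<Sum>z\<in>V. 2)" using mult2 by (intro sum_mono) auto
  finally show ?thesis by simp
qed

lemma Dl_inj: "inj_on Dl Nn"
proof (rule inj_onI)
  fix u v assume u: "u \<in> Nn" and v: "v \<in> Nn" and eq: "Dl u = Dl v"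
  have uF: "u \<in> F" "v \<in> F" using u v Nn_F by auto
  have L: "L u = L v" using eq R_facts(4)[OF uF(1)] R_facts(4)[OF uF(2)] by (simp add: Dl_def)
  show "u = v"
  proof (rule ccontr)
    assume "u \<noteq> v"
    then have "pos u \<noteq> pos v" using pos_inj F_facts(1) uF by metis
    then show False using L_less[OF uF(1) v] L_less[OF uF(2) u] L by fastforce
  qed
qed

lemma main_bound: "card Nn * card Nn \<le> 25 * M * card V"
proof (cases "Nn = {}")
  case True then show ?thesis by simp
next
  case False
  define k where "k = card Nn"
  define n where "n = card V"
  obtain v where v: "v \<in> Nn" using False by blast
  have vF: "v \<in> F" using v Nn_F by auto
  have M1: "1 \<le> M"
  proof -
    have vs: "v \<in> set P" "v \<noteq> s" using F_facts[OF vF] by auto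
    have "1 < length P"
    proof (rule ccontr)
      assume "\<not> 1 < length P"
      then have "length P = 1" using P_facts(4) by (cases P) auto
      then have "P = [s]" using P_facts(2) by (cases P) auto
      then show False using vs by simp
    qed
    then have "E (P ! 0) (P ! Suc 0)" using P_facts(1) unfolding is_walk_def by simp
    then show ?thesis using w_range by (meson le_trans)
  qed
  have kn: "k \<le> n" unfolding k_def n_def using card_mono[OF finV] Nn_F F_facts(1) P_V by (meson subset_iff)
  have "k * (k - 1) \<le> 2 * (\<Sum>a\<in>Dl ` Nn. a)"
    using sum_distinct_nat[of "Dl ` Nn"] finite_Nn card_image[OF Dl_inj] by (simp add: k_def)
  also have "(\<Sum>a\<in>Dl ` Nn. a) = (\<Sum>v\<in>Nn. Dl v)" using sum.reindex[OF Dl_inj, of id] by simp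
  also have "\<dots> \<le> (\<Sum>v\<in>Nn. 2 * M * (card (S v) + 1))"
    using S_card[OF _ M1] Nn_F by (intro sum_mono) auto
  also have "\<dots> = 2 * M * (\<Sum>v\<in>Nn. card (S v)) + 2 * M * k"
    by (simp add: sum_distrib_left sum.distrib k_def algebra_simps)
  finally have a: "k * (k - 1) \<le> 2 * (2 * M * (\<Sum>v\<in>Nn. card (S v)) + 2 * M * k)" by simp
  have b: "M * (\<Sum>v\<in>Nn. card (S v)) \<le> M * (2 * n)" using sum_S by (simp add: n_def)
  have c: "M * k \<le> M * n" using kn by simp
  have d: "k \<le> M * n" using kn M1 by (metis le_trans mult_1 mult_le_mono1)
  have e: "k * k = k * (k - 1) + k" by (cases k) auto
  have f: "2 * (2 * M * (\<Sum>v\<in>Nn. card (S v)) + 2 * M * k) = 4 * (M * (\<Sum>v\<in>Nn. card (S v))) + 4 * (M * k)"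
    by (simp add: algebra_simps)
  have "k * k \<le> 25 * (M * n)" using a b c d e f by linarith
  then show ?thesis by (simp add: k_def n_def algebra_simps)
qed

lemma RF_le: "card (R ` F) \<le> card Nn"
proof -
  have "R ` F \<subseteq> R ` Nn"
  proof
    fix r assume "r \<in> R ` F"
    then obtain v where v: "v \<in> F" "r = R v" by blast
    define m where "m = (LEAST m. \<exists>u \<in> F. R u = R v \<and> pos u = m)"
    have ex: "\<exists>m u. u \<in> F \<and> R u = R v \<and> pos u = m" using v by blast
    obtain u where u: "u \<in> F" "R u = R v" "pos u = m"
      using LeastI_ex[of "\<lambda>m. \<exists>u \<in> F. R u = R v \<and> pos u = m"] ex by (auto simp: m_def)
    have "u \<in> Nn"
      unfolding Nn_def
    proof (intro CollectI conjI ballI impI u(1))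
      fix u' assume "u' \<in> F" "pos u' < pos u"
      then show "R u' \<noteq> R u" using not_less_Least[of "pos u'" "\<lambda>m. \<exists>u \<in> F. R u = R v \<and> pos u = m"] u
        by (auto simp: m_def)
    qed
    then show "r \<in> R ` Nn" using u(2) v(2) by (metis image_eqI)
  qed
  then have "card (R ` F) \<le> card (R ` Nn)" using finite_Nn by (simp add: card_mono)
  also have "\<dots> \<le> card Nn" by (rule card_image_le[OF finite_Nn])
  finally show ?thesis .
qed

lemma final: "real (card (R ` F)) \<le> 5 * sqrt (real M * real (card V))"
proof -
  have "real (card Nn) ^ 2 \<le> 25 * (real M * real (card V))"
    using main_bound by (simp add: power2_eq_square) (metis of_nat_le_iff of_nat_mult of_nat_numeral mult.assoc)
  then have "real (card Nn) \<le> sqrt (25 * (real M * real (card V)))" by (rule real_le_rsqrt)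
  also have "\<dots> = 5 * sqrt (real M * real (card V))" by (simp add: real_sqrt_mult)
  finally have "real (card Nn) \<le> 5 * sqrt (real M * real (card V))" .
  moreover have "real (card (R ` F)) \<le> real (card Nn)" using RF_le by simp
  ultimately show ?thesis by linarith
qed

end

theorem lemma9:
  fixes V :: "'a set" and E :: "'a \<Rightarrow> 'a \<Rightarrow> bool" and w :: "'a \<Rightarrow> 'a \<Rightarrow> nat"
    and M :: nat and s t x :: 'a and P :: "'a list" and R :: "'a \<Rightarrow> 'a list"
  assumes finV: "finite V"
    and E_V: "\<And>u v. E u v \<Longrightarrow> u \<in> V \<and> v \<in> V"
    and E_sym: "\<And>u v. E u v \<Longrightarrow> E v u"
    and E_irrefl: "\<And>u. \<not> E u u"
    and w_sym: "\<And>u v. E u v \<Longrightarrow> w u v = w v u"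
    and w_range: "\<And>u v. E u v \<Longrightarrow> 1 \<le> w u v \<and> w u v \<le> M"
    and s_V: "s \<in> V"
    and P_path: "P \<in> walks_avoiding E {} s t" "distinct P"
    and P_shortest: "enat (walk_weight w P) = gdist E w {} s t"
    and x_on_P: "x \<in> set P"
    and shape: "\<And>v Q. v \<in> set P \<Longrightarrow> v \<noteq> s \<Longrightarrow> replacement_path E w s t v Q
                  \<Longrightarrow> prefix_detour_suffix P Q"
    and R_repl: "\<And>v. v \<in> far_case_II E w P s t x \<Longrightarrow> replacement_path E w s t v (R v)"
    and R_greedy: "\<And>v. v \<in> far_case_II E w P s t x \<Longrightarrow>
        (\<exists>u \<in> far_case_II E w P s t x. gdist E w {} s u < gdist E w {} s v
             \<and> replacement_path E w s t v (R u)) \<Longrightarrow>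
        (\<exists>u \<in> far_case_II E w P s t x. gdist E w {} s u < gdist E w {} s v \<and> R v = R u)"
  shows "real (card (R ` far_case_II E w P s t x)) \<le> 5 * sqrt (real M * real (card V))"
proof -
  interpret setting V E w M s t x P R
    by (rule setting.intro; fact)
  show ?thesis by (rule final)
qed

end
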